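(* Let $G,H$ be simple graphs, $k\in\mathbb N$, and let $\Phi$ be a level-$k$ quantum isomorphism map from $G$ to $H$. Then $\Phi(\boldsymbol F_GX)=\boldsymbol F_H\Phi(X)$ and $\Phi(X\boldsymbol F_G)=\Phi(X)\boldsymbol F_H$ for all $\boldsymbol F\in\mathcal Q_k$ and all $X\in\mathbb C^{V(G)^k\times V(G)^k}$.
   Context: Homomorphism tensors: for a $(k,k)$-bilabelled graph $\boldsymbol F=(F,\boldsymbol u,\boldsymbol v)$ ($\boldsymbol u,\boldsymbol v\in V(F)^k$), $\boldsymbol F_G\in\mathbb C^{V(G)^k\times V(G)^k}$ has $(\boldsymbol x,\boldsymbol y)$-entry the number of homomorphisms $h:F\to G$ with $h(u_i)=x_i$, $h(v_i)=y_i$. Bilabelled minors: via edge contraction, edge deletion, deletion of unlabelled vertices. $\boldsymbol C_k$: vertices $[2k]$, in-labels $(1,\dots,k)$, out-labels $(k+1,\dots,2k)$, edges $\{i,i+1\}$ ($i\in[2k]\setminus\{k,2k\}$), $\{1,k+1\},\{k,2k\}$; $\boldsymbol M_k$: same vertices/labels, edges $\{i,i+k\}$, $i\in[k]$. $\mathcal Q_k^P,\mathcal Q_k^S$ = bilabelled minors of $\boldsymbol C_k,\boldsymbol M_k$; $\mathcal Q_k$ their union. For $\sigma\in\mathfrak S_{2k}$, $(X^\sigma)_{\boldsymbol z}=X_{\boldsymbol w}$ with $w_{\sigma(i)}=z_i$ (index pairs viewed as $2k$-tuples). $\mathscr C_k$ = cyclic group of rotations of the cyclic sequence $(1,\dots,k,2k,\dots,k+1)$.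 A level-$k$ quantum isomorphism map from $G$ to $H$ is a linear $\Phi:\mathbb{C}^{V(G)^k\times V(G)^k}\to\mathbb{C}^{V(H)^k\times V(H)^k}$ that is completely positive, with $\Phi(\boldsymbol F_G\odot X)=\boldsymbol F_H\odot\Phi(X)$ for $\boldsymbol F\in\mathcal Q_k^P$ and all $X$ ($\odot$ entrywise), $\Phi(I)=I=\Phi^*(I)$, $\Phi(J)=J=\Phi^*(J)$ ($J$ all-ones, $\Phi^*$ the trace-inner-product adjoint), $\Phi(\boldsymbol F_G)=\boldsymbol F_H$ for all $\boldsymbol F\in\mathcal Q_k$, and $\Phi(X^\sigma)=\Phi(X)^\sigma$ for $\sigma\in\mathscr C_k$. *)

theory Defs
  imports Complex_Main "HOL-Library.FuncSet"
begin

text \<open>A (k,k)-bilabelled graph: finite vertex set (natural numbers), a set of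
  edges (each a 2-element subset of the vertex set), in-labels and out-labels
  (lists of length k).\<close>
type_synonym bgraph = "nat set \<times> nat set set \<times> nat list \<times> nat list"

definition bV :: "bgraph \<Rightarrow> nat set" where "bV F = fst F"
definition bE :: "bgraph \<Rightarrow> nat set set" where "bE F = fst (snd F)"
definition bin :: "bgraph \<Rightarrow> nat list" where "bin F = fst (snd (snd F))"
definition bout :: "bgraph \<Rightarrow> nat list" where "bout F = snd (snd (snd F))"

inductive_set bminors :: "bgraph \<Rightarrow> bgraph set" for F0 :: bgraph where
  self: "F0 \<in> bminors F0"
| del_edge: "(V, E, u, v) \<in> bminors F0 \<Longrightarrow> e \<in> E \<Longrightarrow> (V, E - {e}, u, v) \<in> bminors F0"
| del_vertex: "(V, E, u, v) \<in> bminors F0 \<Longrightarrow> w \<in> V \<Longrightarrow> w \<notin> set u \<Longrightarrow> w \<notin> set v \<Longrightarrow>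
     (V - {w}, {e \<in> E. w \<notin> e}, u, v) \<in> bminors F0"
| contract: "(V, E, u, v) \<in> bminors F0 \<Longrightarrow> {a, b} \<in> E \<Longrightarrow> a \<noteq> b \<Longrightarrow>
     (V - {b}, (\<lambda>e. (\<lambda>x. if x = b then a else x) ` e) ` (E - {{a, b}}),
      map (\<lambda>x. if x = b then a else x) u, map (\<lambda>x. if x = b then a else x) v) \<in> bminors F0"

text \<open>C_k and M_k (0-indexed: vertices 0..2k-1, in-labels 0..k-1, out-labels k..2k-1).\<close>
definition Ck :: "nat \<Rightarrow> bgraph" where
  "Ck k = ({..<2*k},
           {{i, i+1} | i. i < 2*k \<and> i \<noteq> k - 1 \<and> i \<noteq> 2*k - 1}
             \<union> (if k = 0 then {} else {{0, k}, {k - 1, 2*k - 1}}),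
           [0..<k], [k..<2*k])"

definition Mk :: "nat \<Rightarrow> bgraph" where
  "Mk k = ({..<2*k}, {{i, i+k} | i. i < k}, [0..<k], [k..<2*k])"

definition QP :: "nat \<Rightarrow> bgraph set" where "QP k = bminors (Ck k)"
definition QS :: "nat \<Rightarrow> bgraph set" where "QS k = bminors (Mk k)"
definition Q :: "nat \<Rightarrow> bgraph set" where "Q k = QP k \<union> QS k"

type_synonym 'v kmat = "'v list \<Rightarrow> 'v list \<Rightarrow> complex"

definition tuples :: "nat \<Rightarrow> 'v list set" where "tuples k = {x. length x = k}"

text \<open>The space C^{V^k x V^k}: functions vanishing outside pairs of k-tuples.\<close>
definition Mat :: "nat \<Rightarrow> 'v kmat set" where
  "Mat k = {X. \<forall>x y. X x y \<noteq> 0 \<longrightarrow> length x = k \<and> length y = k}"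

definition mmult :: "nat \<Rightarrow> 'v kmat \<Rightarrow> 'v kmat \<Rightarrow> 'v kmat" where
  "mmult k A B = (\<lambda>x y. \<Sum>z\<in>tuples k. A x z * B z y)"

definition hadamard :: "'v kmat \<Rightarrow> 'v kmat \<Rightarrow> 'v kmat" where
  "hadamard A B = (\<lambda>x y. A x y * B x y)"

definition idm :: "nat \<Rightarrow> 'v kmat" where
  "idm k = (\<lambda>x y. if length x = k \<and> x = y then 1 else 0)"

definition onesm :: "nat \<Rightarrow> 'v kmat" where
  "onesm k = (\<lambda>x y. if length x = k \<and> length y = k then 1 else 0)"

definition tinner :: "nat \<Rightarrow> 'v kmat \<Rightarrow> 'v kmat \<Rightarrow> complex" where
  "tinner k A B = (\<Sum>x\<in>tuples k. \<Sum>y\<in>tuples k. cnj (A x y) * B x y)"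

definition is_hom :: "bgraph \<Rightarrow> ('v \<Rightarrow> 'v \<Rightarrow> bool) \<Rightarrow> (nat \<Rightarrow> 'v) \<Rightarrow> bool" where
  "is_hom F A h \<longleftrightarrow> (\<forall>e\<in>bE F. \<forall>a\<in>e. \<forall>b\<in>e. a \<noteq> b \<longrightarrow> A (h a) (h b))"

definition homT :: "bgraph \<Rightarrow> ('v \<Rightarrow> 'v \<Rightarrow> bool) \<Rightarrow> 'v kmat" where
  "homT F A = (\<lambda>x y. of_nat (card {h \<in> bV F \<rightarrow>\<^sub>E (UNIV :: 'v set).
       is_hom F A h \<and> map h (bin F) = x \<and> map h (bout F) = y}))"

text \<open>(X^sigma)_z = X_w with w_(sigma i) = z_i, index pairs (x,y) viewed as the
  2k-tuple x@y (0-indexed).\<close>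
definition permact :: "nat \<Rightarrow> (nat \<Rightarrow> nat) \<Rightarrow> 'v kmat \<Rightarrow> 'v kmat" where
  "permact k \<sigma> X = (\<lambda>x y. if length x = k \<and> length y = k then
      (let z = x @ y; w = map (\<lambda>j. z ! inv_into {..<2*k} \<sigma> j) [0..<2*k]
       in X (take k w) (drop k w)) else 0)"

text \<open>The cyclic sequence (1,...,k,2k,...,k+1), 0-indexed: position i holds cseq k i.\<close>
definition cseq :: "nat \<Rightarrow> nat \<Rightarrow> nat" where
  "cseq k i = (if i < k then i else 3*k - 1 - i)"

text \<open>Rotation by m steps along the cyclic sequence (cseq k is its own inverse on {..<2k}).\<close>
definition rot :: "nat \<Rightarrow> nat \<Rightarrow> nat \<Rightarrow> nat" where
  "rot k m j = (if j < 2*k then cseq k ((cseq k j + m) mod (2*k)) else j)"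

definition cycgrp :: "nat \<Rightarrow> (nat \<Rightarrow> nat) set" where
  "cycgrp k = {rot k m | m. m < 2*k}"

definition psd :: "'i set \<Rightarrow> ('i \<Rightarrow> 'i \<Rightarrow> complex) \<Rightarrow> bool" where
  "psd I M \<longleftrightarrow> (\<forall>a\<in>I. \<forall>b\<in>I. M a b = cnj (M b a)) \<and>
     (\<forall>v. 0 \<le> Re (\<Sum>a\<in>I. \<Sum>b\<in>I. cnj (v a) * M a b * v b))"

definition completely_positive ::
  "nat \<Rightarrow> ('g kmat \<Rightarrow> 'h kmat) \<Rightarrow> bool" where
  "completely_positive k \<Phi> \<longleftrightarrow>
     (\<forall>n (X :: nat \<Rightarrow> nat \<Rightarrow> 'g kmat). (\<forall>i j. X i j \<in> Mat k) \<longrightarrow>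
        psd ({..<n} \<times> tuples k) (\<lambda>(i, x) (j, y). X i j x y) \<longrightarrow>
        psd ({..<n} \<times> tuples k) (\<lambda>(i, x) (j, y). \<Phi> (X i j) x y))"

text \<open>Simple graphs are given by a symmetric irreflexive adjacency relation on a
  finite vertex type. The adjoint conditions Phi*(I)=I, Phi*(J)=J are written out
  via the defining property of the adjoint w.r.t. the trace inner product.\<close>
definition qiso_map ::
  "nat \<Rightarrow> ('g \<Rightarrow> 'g \<Rightarrow> bool) \<Rightarrow> ('h \<Rightarrow> 'h \<Rightarrow> bool) \<Rightarrow> ('g kmat \<Rightarrow> 'h kmat) \<Rightarrow> bool" where
  "qiso_map k AG AH \<Phi> \<longleftrightarrow>
     (\<forall>X\<in>Mat k. \<Phi> X \<in> Mat k) \<and>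
     (\<forall>X\<in>Mat k. \<forall>Y\<in>Mat k. \<Phi> (\<lambda>x y. X x y + Y x y) = (\<lambda>x y. \<Phi> X x y + \<Phi> Y x y)) \<and>
     (\<forall>X\<in>Mat k. \<forall>c. \<Phi> (\<lambda>x y. c * X x y) = (\<lambda>x y. c * \<Phi> X x y)) \<and>
     completely_positive k \<Phi> \<and>
     (\<forall>F\<in>QP k. \<forall>X\<in>Mat k. \<Phi> (hadamard (homT F AG) X) = hadamard (homT F AH) (\<Phi> X)) \<and>
     \<Phi> (idm k) = idm k \<and>
     (\<forall>X\<in>Mat k. tinner k (idm k) (\<Phi> X) = tinner k (idm k) X) \<and>
     \<Phi> (onesm k) = onesm k \<and>
     (\<forall>X\<in>Mat k. tinner k (onesm k) (\<Phi> X) = tinner k (onesm k) X) \<and>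
     (\<forall>F\<in>Q k. \<Phi> (homT F AG) = homT F AH) \<and>
     (\<forall>\<sigma>\<in>cycgrp k. \<forall>X\<in>Mat k. \<Phi> (permact k \<sigma> X) = permact k \<sigma> (\<Phi> X))"

definition simple_graph :: "('v \<Rightarrow> 'v \<Rightarrow> bool) \<Rightarrow> bool" where
  "simple_graph A \<longleftrightarrow> (\<forall>x y. A x y \<longrightarrow> A y x) \<and> (\<forall>x. \<not> A x x)"

end

theory Submission
  imports Defs
begin


definition adj :: "'v kmat \<Rightarrow> 'v kmat" where "adj A = (\<lambda>x y. cnj (A y x))"

lemma finite_tuples: "finite (tuples k :: 'a::finite list set)"
proof -
  have "tuples k = {xs::'a list. set xs \<subseteq> UNIV \<and> length xs = k}" by (simp add: tuples_def)
  thus ?thesis using finite_lists_length_eq[of "UNIV::'a set" k] by simp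
qed

lemma MatD1: "X \<in> Mat k \<Longrightarrow> length x \<noteq> k \<Longrightarrow> X x y = 0" unfolding Mat_def by blast
lemma MatD2: "X \<in> Mat k \<Longrightarrow> length y \<noteq> k \<Longrightarrow> X x y = 0" unfolding Mat_def by blast
lemma adj_Mat: "X \<in> Mat k \<Longrightarrow> adj X \<in> Mat k" unfolding Mat_def adj_def by auto
lemma idm_Mat: "idm k \<in> Mat k" unfolding Mat_def idm_def by auto
lemma mmult_Mat: assumes "A \<in> Mat k" "B \<in> Mat k" shows "mmult k A B \<in> Mat k"
proof -
  { fix x y assume "mmult k A B x y \<noteq> 0"
    then obtain z where "A x z * B z y \<noteq> 0" unfolding mmult_def
      by (meson sum.not_neutral_contains_not_neutral)
    then have "length x = k \<and> length y = k" using assms unfolding Mat_def by auto }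
  thus ?thesis unfolding Mat_def by blast
qed
lemma adj_adj[simp]: "adj (adj A) = A" by (simp add: adj_def)
lemma adj_idm: "adj (idm k) = idm k" by (auto simp: adj_def idm_def fun_eq_iff)
lemma mmult_idm_left: fixes B :: "'a::finite kmat" assumes "B \<in> Mat k" shows "mmult k (idm k) B = B"
proof (intro ext)
  fix x y show "mmult k (idm k) B x y = B x y"
  proof (cases "length x = k")
    case True
    then have "mmult k (idm k) B x y = (\<Sum>z\<in>tuples k. if z = x then B z y else 0)"
      unfolding mmult_def idm_def by (intro sum.cong) auto
    also have "\<dots> = B x y" using True finite_tuples[of k, where 'a='a] by (simp add: tuples_def[symmetric]) (simp add: tuples_def)
    finally show ?thesis .
  next
    case False then show ?thesis using assms by (simp add: mmult_def idm_def MatD1)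
  qed
qed
lemma mmult_idm_right: fixes A :: "'a::finite kmat" assumes "A \<in> Mat k" shows "mmult k A (idm k) = A"
proof (intro ext)
  fix x y show "mmult k A (idm k) x y = A x y"
  proof (cases "length y = k")
    case True
    then have "mmult k A (idm k) x y = (\<Sum>z\<in>tuples k. if z = y then A x z else 0)"
      unfolding mmult_def idm_def by (intro sum.cong) (auto simp: tuples_def)
    also have "\<dots> = A x y" using True finite_tuples[of k, where 'a='a] by (simp add: tuples_def[symmetric]) (simp add: tuples_def)
    finally show ?thesis .
  next
    case False then show ?thesis using assms by (auto simp: mmult_def idm_def MatD2 tuples_def intro!: sum.neutral)
  qed
qed
lemma adj_mmult: "adj (mmult k A B) = mmult k (adj B) (adj A)"
  by (simp add: adj_def mmult_def cnj_sum fun_eq_iff mult.commute)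

lemma tinner_idm: "tinner k (idm k) (W :: 'a::finite kmat) = (\<Sum>x\<in>tuples k. W x x)"
proof -
  have "tinner k (idm k) W = (\<Sum>x\<in>tuples k. \<Sum>y\<in>tuples k. if y = x then W x y else 0)"
    unfolding tinner_def idm_def by (intro sum.cong) (auto simp: tuples_def)
  also have "\<dots> = (\<Sum>x\<in>tuples k. W x x)" by (simp add: finite_tuples)
  finally show ?thesis .
qed

lemma tinner_ones: "tinner k (onesm k) W = (\<Sum>x\<in>tuples k. \<Sum>y\<in>tuples k. W x y)"
  unfolding tinner_def onesm_def by (intro sum.cong) (auto simp: tuples_def)

lemma gram_psd: "psd I (\<lambda>a b. \<Sum>z\<in>T. cnj (p a z) * p b z)"
  unfolding psd_def
proof (intro conjI ballI allI)
  fix a b show "(\<Sum>z\<in>T. cnj (p a z) * p b z) = cnj (\<Sum>z\<in>T. cnj (p b z) * p a z)"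
    by (simp add: cnj_sum mult.commute)
next
  fix v :: "_ \<Rightarrow> complex"
  define w where "w z = (\<Sum>b\<in>I. p b z * v b)" for z
  have "(\<Sum>a\<in>I. \<Sum>b\<in>I. cnj (v a) * (\<Sum>z\<in>T. cnj (p a z) * p b z) * v b)
      = (\<Sum>a\<in>I. \<Sum>b\<in>I. \<Sum>z\<in>T. cnj (v a) * cnj (p a z) * (p b z * v b))"
    by (simp add: sum_distrib_left sum_distrib_right mult_ac)
  also have "\<dots> = (\<Sum>a\<in>I. \<Sum>z\<in>T. \<Sum>b\<in>I. cnj (v a) * cnj (p a z) * (p b z * v b))"
    by (rule sum.cong[OF refl], rule sum.swap)
  also have "\<dots> = (\<Sum>z\<in>T. \<Sum>a\<in>I. \<Sum>b\<in>I. cnj (v a) * cnj (p a z) * (p b z * v b))"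
    by (rule sum.swap)
  also have "\<dots> = (\<Sum>z\<in>T. cnj (w z) * w z)"
    unfolding w_def cnj_sum sum_product by (simp add: mult_ac)
  finally have eq: "(\<Sum>a\<in>I. \<Sum>b\<in>I. cnj (v a) * (\<Sum>z\<in>T. cnj (p a z) * p b z) * v b) = (\<Sum>z\<in>T. cnj (w z) * w z)" .
  have "0 \<le> Re (\<Sum>z\<in>T. cnj (w z) * w z)"
    unfolding Re_sum by (intro sum_nonneg) simp
  thus "0 \<le> Re (\<Sum>a\<in>I. \<Sum>b\<in>I. cnj (v a) * (\<Sum>z\<in>T. cnj (p a z) * p b z) * v b)"
    using eq by simp
qed

lemma gram_cp:
  fixes P :: "nat \<Rightarrow> 'a::finite kmat" and \<Phi> :: "'a kmat \<Rightarrow> 'b kmat"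
  assumes cp: "completely_positive k \<Phi>" and P: "\<And>i. P i \<in> Mat k"
  shows "psd ({..<n} \<times> tuples k) (\<lambda>(i,x) (j,y). \<Phi> (mmult k (adj (P i)) (P j)) x y)"
proof -
  have eq: "(\<lambda>(i,x) (j,y). mmult k (adj (P i)) (P j) x y)
     = (\<lambda>a b. \<Sum>z\<in>tuples k. cnj ((\<lambda>(i,x) z. P i z x) a z) * (\<lambda>(i,x) z. P i z x) b z)"
    by (auto simp: mmult_def adj_def fun_eq_iff)
  have "psd ({..<n} \<times> tuples k) (\<lambda>(i,x) (j,y). mmult k (adj (P i)) (P j) x y)"
    unfolding eq by (rule gram_psd)
  moreover have "\<forall>i j. mmult k (adj (P i)) (P j) \<in> Mat k" using P adj_Mat mmult_Mat by blast
  ultimately show ?thesis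
    using cp[unfolded completely_positive_def, rule_format, of "\<lambda>i j. mmult k (adj (P i)) (P j)" n]
    by blast
qed

lemma psd_herm: "psd I M \<Longrightarrow> a \<in> I \<Longrightarrow> b \<in> I \<Longrightarrow> M a b = cnj (M b a)"
  unfolding psd_def by blast
lemma psd_pos: "psd I M \<Longrightarrow> 0 \<le> Re (\<Sum>a\<in>I. \<Sum>b\<in>I. cnj (v a) * M a b * v b)"
  unfolding psd_def by blast

lemma Phi_adj:
  fixes \<Phi> :: "'a::finite kmat \<Rightarrow> 'b kmat"
  assumes cp: "completely_positive k \<Phi>" and mat: "\<forall>X\<in>Mat k. \<Phi> X \<in> Mat k" and Z: "Z \<in> Mat k"
  shows "\<Phi> (adj Z) = adj (\<Phi> Z)"
proof (intro ext)
  fix x y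
  define P where "P i = (if i = 0 then idm k else Z)" for i :: nat
  have psd: "psd ({..<2} \<times> tuples k) (\<lambda>(i,x) (j,y). \<Phi> (mmult k (adj (P i)) (P j)) x y)"
    by (rule gram_cp[OF cp]) (auto simp: P_def idm_Mat Z)
  show "\<Phi> (adj Z) x y = adj (\<Phi> Z) x y"
  proof (cases "length x = k \<and> length y = k")
    case True
    have "\<Phi> (mmult k (adj (P 1)) (P 0)) x y = cnj (\<Phi> (mmult k (adj (P 0)) (P 1)) y x)"
      using psd_herm[OF psd, of "(1,x)" "(0,y)"] True by (simp add: tuples_def)
    moreover have "mmult k (adj (P 1)) (P 0) = adj Z" "mmult k (adj (P 0)) (P 1) = Z"
      by (simp_all add: P_def adj_idm mmult_idm_left mmult_idm_right Z adj_Mat)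
    ultimately show ?thesis by (simp add: adj_def)
  next
    case False
    have m1: "\<Phi> (adj Z) \<in> Mat k" "\<Phi> Z \<in> Mat k" using mat Z adj_Mat by auto
    show ?thesis using False MatD1[OF m1(1)] MatD2[OF m1(1)] MatD1[OF m1(2)] MatD2[OF m1(2)]
      unfolding adj_def[of "\<Phi> Z"] by auto
  qed
qed



lemma sum_prod_split: "(\<Sum>a\<in>A \<times> B. g a) = (\<Sum>i\<in>A. \<Sum>z\<in>B. g (i,z))"
  by (simp add: sum.cartesian_product)

lemma sum3: "(\<Sum>i<(3::nat). g i) = g 0 + g 1 + g 2"
  by (simp add: eval_nat_numeral)

lemma dL: assumes "finite T" "x \<in> T"
  shows "(\<Sum>z\<in>T. \<Sum>w\<in>T. cnj (if z = x then a else 0) * M z w * u w) = cnj a * (\<Sum>w\<in>T. M x w * u w)"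
proof -
  have "(\<Sum>z\<in>T. \<Sum>w\<in>T. cnj (if z = x then a else 0) * M z w * u w)
     = (\<Sum>z\<in>T. if z = x then cnj a * (\<Sum>w\<in>T. M x w * u w) else 0)"
    by (intro sum.cong) (auto simp: sum_distrib_left mult_ac)
  also have "\<dots> = cnj a * (\<Sum>w\<in>T. M x w * u w)" using assms by simp
  finally show ?thesis .
qed

lemma dR: assumes "finite T" "y \<in> T"
  shows "(\<Sum>z\<in>T. \<Sum>w\<in>T. cnj (u z) * M z w * (if w = y then a else 0)) = a * (\<Sum>z\<in>T. cnj (u z) * M z y)"
proof -
  have "(\<Sum>z\<in>T. \<Sum>w\<in>T. cnj (u z) * M z w * (if w = y then a else 0))
     = (\<Sum>z\<in>T. a * (cnj (u z) * M z y))"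
  proof (intro sum.cong refl)
    fix z show "(\<Sum>w\<in>T. cnj (u z) * M z w * (if w = y then a else 0)) = a * (cnj (u z) * M z y)"
      using assms by (simp add: if_distrib cong: if_cong)
  qed
  also have "\<dots> = a * (\<Sum>z\<in>T. cnj (u z) * M z y)" by (simp add: sum_distrib_left)
  finally show ?thesis .
qed

lemma dLR: assumes "finite T" "x \<in> T" "y \<in> T"
  shows "(\<Sum>z\<in>T. \<Sum>w\<in>T. cnj (if z = x then a else 0) * M z w * (if w = y then b else 0)) = cnj a * M x y * b"
  using dL[OF assms(1,2), of a M "\<lambda>w. if w = y then b else 0"] assms
  by (simp add: if_distrib cong: if_cong)

lemma dI:
  fixes u :: "'a::finite list \<Rightarrow> complex"
  shows "(\<Sum>z\<in>tuples k. \<Sum>w\<in>tuples k. cnj (u z) * idm k z w * u w) = (\<Sum>z\<in>tuples k. cnj (u z) * u z)"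
proof (intro sum.cong refl)
  fix z :: "'a list" assume z: "z \<in> tuples k"
  have "(\<Sum>w\<in>tuples k. cnj (u z) * idm k z w * u w) = (\<Sum>w\<in>tuples k. if w = z then cnj (u z) * u w else 0)"
    using z by (intro sum.cong) (auto simp: idm_def tuples_def)
  also have "\<dots> = cnj (u z) * u z" using z finite_tuples[of k, where 'a='a] by simp
  finally show "(\<Sum>w\<in>tuples k. cnj (u z) * idm k z w * u w) = cnj (u z) * u z" .
qed

lemma re_cnj_mult: "Re (cnj a * a) = (cmod a)^2"
  by (metis Re_complex_of_real complex_norm_square mult.commute)

lemma re_ofreal_mult: "Re (complex_of_real r * z) = r * Re z"
  by simp

lemma quad_zero:
  fixes E :: complex and K :: real
  assumes h: "\<And>s. 0 \<le> 2 * Re (s * E) + (cmod s)^2 * K"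
  shows "E = 0"
proof (rule ccontr)
  assume "E \<noteq> 0"
  then have e: "(cmod E)^2 > 0" by simp
  define t where "t = 1 / (\<bar>K\<bar> + 1)"
  have t0: "t > 0" unfolding t_def by (simp add: add_pos_nonneg)
  have tK: "t * K < 1"
  proof -
    have "t * K \<le> t * \<bar>K\<bar>" using t0 by (simp add: mult_left_mono)
    also have "\<dots> < 1" unfolding t_def by (simp add: field_simps)
    finally show ?thesis .
  qed
  define s where "s = - (complex_of_real t * cnj E)"
  have ce: "cnj E * E = complex_of_real ((cmod E)^2)" by (metis complex_norm_square mult.commute)
  have "s * E = - complex_of_real (t * (cmod E)^2)"
    unfolding s_def by (simp add: ce mult.assoc)
  then have r1: "Re (s * E) = - t * (cmod E)^2" by simp
  have r2: "(cmod s)^2 = t^2 * (cmod E)^2"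
    unfolding s_def using t0 by (simp add: norm_mult power_mult_distrib)
  have "0 \<le> 2 * (- t * (cmod E)^2) + t^2 * (cmod E)^2 * K" using h[of s] r1 r2 by simp
  also have "\<dots> = t * (cmod E)^2 * (t * K - 2)" by (simp add: algebra_simps power2_eq_square)
  also have "\<dots> < 0" using t0 e tK by (intro mult_pos_neg) auto
  finally show False by simp
qed

lemma mult_dom:
  fixes \<Phi> :: "'g::finite kmat \<Rightarrow> 'h::finite kmat"
  assumes cp: "completely_positive k \<Phi>" and mat: "\<forall>X\<in>Mat k. \<Phi> X \<in> Mat k"
    and id: "\<Phi> (idm k) = idm k" and R: "R \<in> Mat k" and Y: "Y \<in> Mat k"
    and cond: "Re (\<Sum>x\<in>tuples k. \<Phi> (mmult k (adj R) R) x x) \<le> (\<Sum>x\<in>tuples k. \<Sum>z\<in>tuples k. (cmod (\<Phi> R z x))^2)"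
  shows "\<Phi> (mmult k (adj R) Y) = mmult k (adj (\<Phi> R)) (\<Phi> Y)"
proof -
  define T where "T = (tuples k :: 'h list set)"
  have fT: "finite T" unfolding T_def by (rule finite_tuples)
  define P where "P i = (if i = 0 then idm k else if i = 1 then R else Y)" for i :: nat
  define G where "G i j = \<Phi> (mmult k (adj (P i)) (P j))" for i j
  define C where "C = \<Phi> R"
  define U where "U = \<Phi> Y"
  define W where "W = \<Phi> (mmult k (adj R) Y)"
  define K where "K = \<Phi> (mmult k (adj R) R)"
  define L where "L = \<Phi> (mmult k (adj Y) Y)"
  have psd: "psd ({..<3} \<times> T) (\<lambda>(i,x) (j,y). G i j x y)"
    unfolding G_def T_def by (rule gram_cp[OF cp]) (simp add: P_def idm_Mat R Y)
  have RM: "adj R \<in> Mat k" "adj Y \<in> Mat k" using R Y adj_Mat by auto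
  have G00: "G 0 0 = idm k" by (simp add: G_def P_def adj_idm mmult_idm_left idm_Mat id)
  have G01: "G 0 1 = C" by (simp add: G_def P_def adj_idm mmult_idm_left R C_def)
  have G02: "G 0 2 = U" by (simp add: G_def P_def adj_idm mmult_idm_left Y U_def)
  have G10: "G 1 0 = adj C" by (simp add: G_def P_def mmult_idm_right RM C_def Phi_adj[OF cp mat R])
  have G20: "G 2 0 = adj U" by (simp add: G_def P_def mmult_idm_right RM U_def Phi_adj[OF cp mat Y])
  have G11: "G 1 1 = K" by (simp add: G_def P_def K_def)
  have G12: "G 1 2 = W" by (simp add: G_def P_def W_def)
  have G22: "G 2 2 = L" by (simp add: G_def P_def L_def)
  have G21: "G 2 1 = adj W"
  proof -
    have "mmult k (adj Y) R = adj (mmult k (adj R) Y)" by (simp add: adj_mmult)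
    then show ?thesis using Phi_adj[OF cp mat mmult_Mat[OF RM(1) Y]]
      by (simp add: G_def P_def W_def)
  qed
  have key: "0 \<le> Re (K x x) - (\<Sum>z\<in>T. (cmod (C z x))^2)
      + 2 * Re (s * (W x y - (\<Sum>z\<in>T. cnj (C z x) * U z y))) + (cmod s)^2 * Re (L y y)"
    if x: "x \<in> T" and y: "y \<in> T" for x y s
  proof -
    define v0 where "v0 z = - C z x" for z
    define v1 where "v1 z = (if z = x then 1 else 0 :: complex)" for z
    define v2 where "v2 z = (if z = y then s else 0 :: complex)" for z
    define v where "v = (\<lambda>(i::nat,z). if i = 0 then v0 z else if i = 1 then v1 z else v2 z)"
    define S0 where "S0 = (\<Sum>z\<in>T. cnj (C z x) * C z x)"
    define S1 where "S1 = (\<Sum>z\<in>T. cnj (C z x) * U z y)"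
    have "0 \<le> Re (\<Sum>a\<in>{..<3} \<times> T. \<Sum>b\<in>{..<3} \<times> T. cnj (v a) * (\<lambda>(i,x) (j,y). G i j x y) a b * v b)"
      by (rule psd_pos[OF psd])
    also have "(\<Sum>a\<in>{..<3} \<times> T. \<Sum>b\<in>{..<3} \<times> T. cnj (v a) * (\<lambda>(i,x) (j,y). G i j x y) a b * v b)
       = (\<Sum>i<3. \<Sum>j<3. \<Sum>z\<in>T. \<Sum>w\<in>T. cnj (v (i,z)) * G i j z w * v (j,w))"
      unfolding sum_prod_split by simp (rule sum.cong[OF refl], rule sum.swap)
    also have "\<dots> = (\<Sum>z\<in>T. \<Sum>w\<in>T. cnj (v0 z) * G 0 0 z w * v0 w)
       + (\<Sum>z\<in>T. \<Sum>w\<in>T. cnj (v0 z) * G 0 1 z w * v1 w)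
       + (\<Sum>z\<in>T. \<Sum>w\<in>T. cnj (v0 z) * G 0 2 z w * v2 w)
       + (\<Sum>z\<in>T. \<Sum>w\<in>T. cnj (v1 z) * G 1 0 z w * v0 w)
       + (\<Sum>z\<in>T. \<Sum>w\<in>T. cnj (v1 z) * G 1 1 z w * v1 w)
       + (\<Sum>z\<in>T. \<Sum>w\<in>T. cnj (v1 z) * G 1 2 z w * v2 w)
       + (\<Sum>z\<in>T. \<Sum>w\<in>T. cnj (v2 z) * G 2 0 z w * v0 w)
       + (\<Sum>z\<in>T. \<Sum>w\<in>T. cnj (v2 z) * G 2 1 z w * v1 w)
       + (\<Sum>z\<in>T. \<Sum>w\<in>T. cnj (v2 z) * G 2 2 z w * v2 w)"
      by (simp add: sum3 v_def sum.distrib add_ac)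
    also have "\<dots> = S0 - S0 - s * S1 - S0 + K x x + s * W x y - cnj s * cnj S1
        + cnj s * cnj (W x y) + cnj s * L y y * s"
    proof -
      have t00: "(\<Sum>z\<in>T. \<Sum>w\<in>T. cnj (v0 z) * G 0 0 z w * v0 w) = S0"
        unfolding G00 T_def dI by (simp add: v0_def S0_def T_def)
      have t01: "(\<Sum>z\<in>T. \<Sum>w\<in>T. cnj (v0 z) * G 0 1 z w * v1 w) = - S0"
        unfolding G01 v1_def dR[OF fT x] by (simp add: v0_def S0_def sum_negf)
      have t02: "(\<Sum>z\<in>T. \<Sum>w\<in>T. cnj (v0 z) * G 0 2 z w * v2 w) = - (s * S1)"
        unfolding G02 v2_def dR[OF fT y] by (simp add: v0_def S1_def sum_negf)
      have t10: "(\<Sum>z\<in>T. \<Sum>w\<in>T. cnj (v1 z) * G 1 0 z w * v0 w) = - S0"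
        unfolding G10 v1_def dL[OF fT x] by (simp add: v0_def S0_def sum_negf adj_def mult.commute)
      have t11: "(\<Sum>z\<in>T. \<Sum>w\<in>T. cnj (v1 z) * G 1 1 z w * v1 w) = K x x"
        unfolding G11 v1_def dLR[OF fT x x] by simp
      have t12: "(\<Sum>z\<in>T. \<Sum>w\<in>T. cnj (v1 z) * G 1 2 z w * v2 w) = s * W x y"
        unfolding G12 v1_def v2_def dLR[OF fT x y] by simp
      have t20: "(\<Sum>z\<in>T. \<Sum>w\<in>T. cnj (v2 z) * G 2 0 z w * v0 w) = - (cnj s * cnj S1)"
        unfolding G20 v2_def dL[OF fT y] by (simp add: v0_def S1_def sum_negf adj_def cnj_sum mult.commute)
      have t21: "(\<Sum>z\<in>T. \<Sum>w\<in>T. cnj (v2 z) * G 2 1 z w * v1 w) = cnj s * cnj (W x y)"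
        unfolding G21 v1_def v2_def dLR[OF fT y x] by (simp add: adj_def)
      have t22: "(\<Sum>z\<in>T. \<Sum>w\<in>T. cnj (v2 z) * G 2 2 z w * v2 w) = cnj s * L y y * s"
        unfolding G22 v2_def dLR[OF fT y y] by simp
      show ?thesis unfolding t00 t01 t02 t10 t11 t12 t20 t21 t22 by simp
    qed
    finally have "0 \<le> Re (S0 - S0 - s * S1 - S0 + K x x + s * W x y - cnj s * cnj S1
        + cnj s * cnj (W x y) + cnj s * L y y * s)" .
    moreover have "Re S0 = (\<Sum>z\<in>T. (cmod (C z x))^2)"
      unfolding S0_def Re_sum re_cnj_mult ..
    moreover have "Re (cnj s * L y y * s) = (cmod s)^2 * Re (L y y)"
    proof -
      have cs: "cnj s * s = complex_of_real ((cmod s)^2)" by (metis complex_norm_square mult.commute)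
      have "cnj s * L y y * s = complex_of_real ((cmod s)^2) * L y y"
        by (metis cs mult.commute mult.left_commute)
      thus ?thesis by (simp only: re_ofreal_mult)
    qed
    ultimately show ?thesis unfolding S1_def[symmetric] by (simp add: algebra_simps)
  qed
  define d where "d x = Re (K x x) - (\<Sum>z\<in>T. (cmod (C z x))^2)" for x
  have dnn: "0 \<le> d x" if "x \<in> T" for x
    using key[OF that that, of 0] by (simp add: d_def)
  have "(\<Sum>x\<in>T. d x) \<le> 0"
    using cond unfolding d_def sum_subtractf Re_sum[symmetric] by (simp add: T_def K_def C_def)
  moreover have "0 \<le> (\<Sum>x\<in>T. d x)" using dnn by (simp add: sum_nonneg)
  ultimately have "(\<Sum>x\<in>T. d x) = 0" by simp
  then have d0: "d x = 0" if "x \<in> T" for x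
    using sum_nonneg_eq_0_iff[OF fT] dnn that by blast
  show ?thesis
  proof (intro ext)
    fix x y
    show "\<Phi> (mmult k (adj R) Y) x y = mmult k (adj (\<Phi> R)) (\<Phi> Y) x y"
    proof (cases "x \<in> T \<and> y \<in> T")
      case True
      then have xT: "x \<in> T" and yT: "y \<in> T" by auto
      have "0 \<le> 2 * Re (s * (W x y - (\<Sum>z\<in>T. cnj (C z x) * U z y))) + (cmod s)^2 * Re (L y y)" for s
        using key[OF xT yT, of s] d0[OF xT] unfolding d_def by linarith
      then have "W x y - (\<Sum>z\<in>T. cnj (C z x) * U z y) = 0" by (rule quad_zero)
      then show ?thesis by (simp add: W_def C_def U_def T_def mmult_def adj_def)
    next
      case False
      have m: "\<Phi> (mmult k (adj R) Y) \<in> Mat k" "\<Phi> R \<in> Mat k" "\<Phi> Y \<in> Mat k"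
        using mat mmult_Mat[OF RM(1) Y] R Y by auto
      have "mmult k (adj (\<Phi> R)) (\<Phi> Y) \<in> Mat k" using m adj_Mat mmult_Mat by blast
      then have "length x \<noteq> k \<or> length y \<noteq> k" using False unfolding T_def tuples_def by auto
      then show ?thesis using m(1) \<open>mmult k (adj (\<Phi> R)) (\<Phi> Y) \<in> Mat k\<close>
        by (auto simp: MatD1 MatD2)
    qed
  qed
qed



lemma bminors_inv:
  assumes "F \<in> bminors F0" and "length (bin F0) = k" "length (bout F0) = k"
    "bV F0 \<subseteq> set (bin F0) \<union> set (bout F0)"
  shows "length (bin F) = k \<and> length (bout F) = k \<and> bV F \<subseteq> set (bin F) \<union> set (bout F)"
  using assms(1)
proof (induction rule: bminors.induct)
  case self then show ?case using assms by auto
next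
  case (del_edge V E u v e) then show ?case by (simp add: bV_def bin_def bout_def)
next
  case (del_vertex V E u v w) then show ?case by (auto simp: bV_def bin_def bout_def)
next
  case (contract V E u v a b)
  then have IH: "length u = k" "length v = k" "V \<subseteq> set u \<union> set v" by (auto simp: bV_def bin_def bout_def)
  have "V - {b} \<subseteq> set (map (\<lambda>x. if x = b then a else x) u) \<union> set (map (\<lambda>x. if x = b then a else x) v)"
  proof
    fix y assume y: "y \<in> V - {b}"
    then have fy: "(\<lambda>x. if x = b then a else x) y = y" by auto
    have "y \<in> set u \<or> y \<in> set v" using y IH(3) by auto
    then show "y \<in> set (map (\<lambda>x. if x = b then a else x) u) \<union> set (map (\<lambda>x. if x = b then a else x) v)"
    proof
      assume "y \<in> set u"
      then have "(\<lambda>x. if x = b then a else x) y \<in> (\<lambda>x. if x = b then a else x) ` set u" by (rule imageI)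
      then show ?thesis unfolding fy by simp
    next
      assume "y \<in> set v"
      then have "(\<lambda>x. if x = b then a else x) y \<in> (\<lambda>x. if x = b then a else x) ` set v" by (rule imageI)
      then show ?thesis unfolding fy by simp
    qed
  qed
  then show ?case using IH by (simp add: bV_def bin_def bout_def)
qed

lemma Q_inv:
  assumes "F \<in> Q k"
  shows "length (bin F) = k \<and> length (bout F) = k \<and> bV F \<subseteq> set (bin F) \<union> set (bout F)"
proof -
  have "F \<in> bminors (Ck k) \<or> F \<in> bminors (Mk k)" using assms by (auto simp: Q_def QP_def QS_def)
  then show ?thesis
  proof
    assume "F \<in> bminors (Ck k)"
    then show ?thesis by (rule bminors_inv) (auto simp: Ck_def bV_def bin_def bout_def)
  next
    assume "F \<in> bminors (Mk k)"
    then show ?thesis by (rule bminors_inv) (auto simp: Mk_def bV_def bin_def bout_def)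
  qed
qed

lemma homT_Mat: assumes "F \<in> Q k" shows "homT F A \<in> Mat k"
proof -
  { fix x y assume "homT F A x y \<noteq> 0"
    then have "{h \<in> bV F \<rightarrow>\<^sub>E UNIV. is_hom F A h \<and> map h (bin F) = x \<and> map h (bout F) = y} \<noteq> {}"
      unfolding homT_def by (metis card.empty of_nat_0)
    then obtain h where "map h (bin F) = x" "map h (bout F) = y" by blast
    then have "length x = k \<and> length y = k" using Q_inv[OF assms] by auto }
  thus ?thesis unfolding Mat_def by blast
qed

lemma homT_01: assumes "F \<in> Q k" shows "homT F A x y = 0 \<or> homT F A x y = 1"
proof -
  define S where "S = {h \<in> bV F \<rightarrow>\<^sub>E UNIV. is_hom F A h \<and> map h (bin F) = x \<and> map h (bout F) = y}"
  have sub: "bV F \<subseteq> set (bin F) \<union> set (bout F)" using Q_inv[OF assms] by blast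
  have uniq: "\<forall>h1\<in>S. \<forall>h2\<in>S. h1 = h2"
  proof (intro ballI ext)
    fix h1 h2 i assume h1: "h1 \<in> S" and h2: "h2 \<in> S"
    show "h1 i = h2 i"
    proof (cases "i \<in> bV F")
      case True
      have "map h1 (bin F) = map h2 (bin F)" "map h1 (bout F) = map h2 (bout F)"
        using h1 h2 by (auto simp: S_def)
      then show ?thesis using True sub by (auto simp: map_eq_conv)
    next
      case False
      then show ?thesis using h1 h2 by (auto simp: S_def PiE_def extensional_def)
    qed
  qed
  have "card S \<le> 1"
  proof (cases "finite S")
    case True then show ?thesis using uniq card_le_Suc0_iff_eq by fastforce
  next
    case False then show ?thesis by simp
  qed
  then have "card S = 0 \<or> card S = 1" by auto
  then show ?thesis unfolding homT_def S_def[symmetric] by auto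
qed

theorem lemma3p5:
  fixes AG :: "'g::finite \<Rightarrow> 'g \<Rightarrow> bool" and AH :: "'h::finite \<Rightarrow> 'h \<Rightarrow> bool"
    and k :: nat and \<Phi> :: "'g kmat \<Rightarrow> 'h kmat"
  assumes "simple_graph AG" and "simple_graph AH"
    and "qiso_map k AG AH \<Phi>"
  shows "\<forall>F\<in>Q k. \<forall>X\<in>Mat k.
           \<Phi> (mmult k (homT F AG) X) = mmult k (homT F AH) (\<Phi> X) \<and>
           \<Phi> (mmult k X (homT F AG)) = mmult k (\<Phi> X) (homT F AH)"
proof (intro ballI conjI)
  fix F and X :: "'g kmat" assume F: "F \<in> Q k" and X: "X \<in> Mat k"
  have mat: "\<forall>X\<in>Mat k. \<Phi> X \<in> Mat k" and cp: "completely_positive k \<Phi>"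
    and id: "\<Phi> (idm k) = idm k"
    and trI: "\<forall>X\<in>Mat k. tinner k (idm k) (\<Phi> X) = tinner k (idm k) X"
    and trJ: "\<forall>X\<in>Mat k. tinner k (onesm k) (\<Phi> X) = tinner k (onesm k) X"
    and hom: "\<forall>F\<in>Q k. \<Phi> (homT F AG) = homT F AH"
    using assms(3) unfolding qiso_map_def by blast+
  define A where "A = homT F AG"
  define B where "B = homT F AH"
  have AM: "A \<in> Mat k" and BM: "B \<in> Mat k" unfolding A_def B_def using homT_Mat[OF F] by auto
  have A01: "\<And>x y. A x y = 0 \<or> A x y = 1" unfolding A_def using homT_01[OF F] by blast
  have B01: "\<And>x y. B x y = 0 \<or> B x y = 1" unfolding B_def using homT_01[OF F] by blast
  have PA: "\<Phi> A = B" unfolding A_def B_def using hom F by blast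
  have PadjA: "\<Phi> (adj A) = adj B" using Phi_adj[OF cp mat AM] PA by simp
  have sq: "\<And>a::complex. a = 0 \<or> a = 1 \<Longrightarrow> a * cnj a = a" by auto
  have sqB: "\<And>a::complex. a = 0 \<or> a = 1 \<Longrightarrow> (cmod a)^2 = Re a" by auto
  have sqA: "\<And>x z. A x z * cnj (A x z) = A x z" using A01 sq by blast
  have sqA': "\<And>x z. cnj (A x z) * A x z = A x z" using sqA by (simp add: mult.commute)
  have sqB': "\<And>x z. (cmod (B x z))^2 = Re (B x z)" using B01 sqB by blast
  have cm: "\<And>z x. cmod (adj B z x) = cmod (B x z)" by (simp add: adj_def)
  have sumA: "(\<Sum>x\<in>tuples k. \<Sum>z\<in>tuples k. A x z) = (\<Sum>x\<in>tuples k. \<Sum>z\<in>tuples k. B x z)"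
    using trJ[rule_format, OF AM] unfolding PA tinner_ones by simp
  have reB: "Re (\<Sum>x\<in>tuples k. \<Sum>z\<in>tuples k. B x z) = (\<Sum>x\<in>tuples k. \<Sum>z\<in>tuples k. (cmod (B x z))^2)"
    unfolding Re_sum sqB' ..
  show "\<Phi> (mmult k (homT F AG) X) = mmult k (homT F AH) (\<Phi> X)"
  proof -
    have Z: "mmult k A (adj A) \<in> Mat k" using AM adj_Mat mmult_Mat by blast
    have "(\<Sum>x\<in>tuples k. \<Phi> (mmult k A (adj A)) x x) = (\<Sum>x\<in>tuples k. mmult k A (adj A) x x)"
      using trI Z by (simp add: tinner_idm)
    also have "\<dots> = (\<Sum>x\<in>tuples k. \<Sum>z\<in>tuples k. A x z)"
      unfolding mmult_def adj_def sqA ..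
    finally have c: "Re (\<Sum>x\<in>tuples k. \<Phi> (mmult k (adj (adj A)) (adj A)) x x)
       \<le> (\<Sum>x\<in>tuples k. \<Sum>z\<in>tuples k. (cmod (\<Phi> (adj A) z x))^2)"
      using sumA reB unfolding adj_adj PadjA cm by simp
    have "\<Phi> (mmult k (adj (adj A)) X) = mmult k (adj (\<Phi> (adj A))) (\<Phi> X)"
      by (rule mult_dom[OF cp mat id adj_Mat[OF AM] X c])
    then have "\<Phi> (mmult k A X) = mmult k B (\<Phi> X)" unfolding PadjA adj_adj .
    then show ?thesis unfolding A_def B_def .
  qed
  show "\<Phi> (mmult k X (homT F AG)) = mmult k (\<Phi> X) (homT F AH)"
  proof -
    have Z: "mmult k (adj A) A \<in> Mat k" using AM adj_Mat mmult_Mat by blast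
    have "(\<Sum>x\<in>tuples k. \<Phi> (mmult k (adj A) A) x x) = (\<Sum>x\<in>tuples k. mmult k (adj A) A x x)"
      using trI Z by (simp add: tinner_idm)
    also have "\<dots> = (\<Sum>x\<in>tuples k. \<Sum>z\<in>tuples k. cnj (A z x) * A z x)"
      unfolding mmult_def adj_def by simp
    also have "\<dots> = (\<Sum>z\<in>tuples k. \<Sum>x\<in>tuples k. A z x)"
      unfolding sqA' by (rule sum.swap)
    finally have c0: "(\<Sum>x\<in>tuples k. \<Phi> (mmult k (adj A) A) x x) = (\<Sum>z\<in>tuples k. \<Sum>x\<in>tuples k. A z x)" .
    have c: "Re (\<Sum>x\<in>tuples k. \<Phi> (mmult k (adj A) A) x x)
       \<le> (\<Sum>x\<in>tuples k. \<Sum>z\<in>tuples k. (cmod (\<Phi> A z x))^2)"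
    proof -
      have sw: "(\<Sum>x\<in>tuples k. \<Sum>z\<in>tuples k. (cmod (B z x))^2) = (\<Sum>z\<in>tuples k. \<Sum>x\<in>tuples k. (cmod (B z x))^2)"
        by (rule sum.swap)
      show ?thesis using sumA reB c0
        unfolding PA sw by simp
    qed
    have XM: "adj X \<in> Mat k" using X adj_Mat by blast
    have e1: "\<Phi> (mmult k (adj A) (adj X)) = mmult k (adj B) (adj (\<Phi> X))"
      using mult_dom[OF cp mat id AM XM c] unfolding PA Phi_adj[OF cp mat X] .
    have XA: "mmult k X A \<in> Mat k" using X AM mmult_Mat by blast
    have "\<Phi> (mmult k X A) = adj (adj (\<Phi> (mmult k X A)))" by simp
    also have "\<dots> = adj (\<Phi> (adj (mmult k X A)))" using Phi_adj[OF cp mat XA] by simp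
    also have "\<dots> = adj (mmult k (adj B) (adj (\<Phi> X)))" by (simp add: adj_mmult e1)
    also have "\<dots> = mmult k (\<Phi> X) B" by (simp add: adj_mmult)
    finally show ?thesis by (simp add: A_def B_def)
  qed
qed

end
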